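(* Let $\mathrm{R}$ be an algebraic curvature tensor on an $n$-dimensional inner product space $(V,g)$, $n\geq 3$, such that (a) $\mathrm{R}\in\mathrm{C}_{\mathrm{PIC1}}$ if $n\geq 4$; (b) all sectional curvatures of $\mathrm{R}$ are non-negative if $n=3$. Then $\mathrm{Ric}(\mathrm{R})\leq \tfrac12\,\mathrm{scal}(\mathrm{R})\,g$.
   Context: The cone $\mathrm{C}_{\mathrm{PIC1}}$: $\mathrm{R}$ lies in it if its complex sectional curvature $\mathrm{R}(u,v,\bar u,\bar v)$ is non-negative on every two-complex-dimensional subspace $\Sigma$ of $V\otimes\mathbb{C}$ (for unitary bases $\{u,v\}$) containing a non-zero vector $w$ with $\bar w\perp\Sigma$; for $n\geq 4$ equivalently $\mathrm{R}_{1331}+\lambda^2\mathrm{R}_{1441}+\mathrm{R}_{2332}+\lambda^2\mathrm{R}_{2442}+2\lambda\mathrm{R}_{1234}\geq 0$ for all orthonormal 4-frames and $\lambda\in[0,1]$. $\mathrm{Ric}(\mathrm{R})$ and $\mathrm{scal}(\mathrm{R})$ are the Ricci and scalar contractions of $\mathrm{R}$. *)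

theory Defs
  imports "HOL-Analysis.Analysis"
begin

definition algebraic_curvature_tensor ::
  "('a::euclidean_space \<Rightarrow> 'a \<Rightarrow> 'a \<Rightarrow> 'a \<Rightarrow> real) \<Rightarrow> bool" where
  "algebraic_curvature_tensor R \<longleftrightarrow>
     (\<forall>y z w. linear (\<lambda>x. R x y z w)) \<and>
     (\<forall>x z w. linear (\<lambda>y. R x y z w)) \<and>
     (\<forall>x y w. linear (\<lambda>z. R x y z w)) \<and>
     (\<forall>x y z. linear (\<lambda>w. R x y z w)) \<and>
     (\<forall>x y z w. R x y z w = - R y x z w) \<and>
     (\<forall>x y z w. R x y z w = - R x y w z) \<and>
     (\<forall>x y z w. R x y z w = R z w x y) \<and>
     (\<forall>x y z w. R x y z w + R y z x w + R z x y w = 0)"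

text \<open>Non-negative sectional curvature (convention: the sectional curvature of the
  plane spanned by x,y has the sign of R(x,y,y,x)).\<close>
definition nonneg_sectional :: "('a::euclidean_space \<Rightarrow> 'a \<Rightarrow> 'a \<Rightarrow> 'a \<Rightarrow> real) \<Rightarrow> bool" where
  "nonneg_sectional R \<longleftrightarrow> (\<forall>x y. R x y y x \<ge> 0)"

definition orthonormal4 :: "'a::euclidean_space \<Rightarrow> 'a \<Rightarrow> 'a \<Rightarrow> 'a \<Rightarrow> bool" where
  "orthonormal4 e1 e2 e3 e4 \<longleftrightarrow>
     (\<forall>i\<in>{0..<4::nat}. \<forall>j\<in>{0..<4::nat}.
        [e1,e2,e3,e4] ! i \<bullet> [e1,e2,e3,e4] ! j = (if i = j then 1 else 0))"

text \<open>The cone PIC1, via its characterization (valid for n \<ge> 4) by orthonormal 4-frames.\<close>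
definition in_PIC1 :: "('a::euclidean_space \<Rightarrow> 'a \<Rightarrow> 'a \<Rightarrow> 'a \<Rightarrow> real) \<Rightarrow> bool" where
  "in_PIC1 R \<longleftrightarrow>
     (\<forall>e1 e2 e3 e4 (t::real). orthonormal4 e1 e2 e3 e4 \<longrightarrow> 0 \<le> t \<longrightarrow> t \<le> 1 \<longrightarrow>
        R e1 e3 e3 e1 + t\<^sup>2 * R e1 e4 e4 e1 + R e2 e3 e3 e2 + t\<^sup>2 * R e2 e4 e4 e2
          + 2 * t * R e1 e2 e3 e4 \<ge> 0)"

definition Ric :: "('a::euclidean_space \<Rightarrow> 'a \<Rightarrow> 'a \<Rightarrow> 'a \<Rightarrow> real) \<Rightarrow> 'a \<Rightarrow> 'a \<Rightarrow> real" where
  "Ric R x y = (\<Sum>b\<in>Basis. R x b b y)"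

definition scal :: "('a::euclidean_space \<Rightarrow> 'a \<Rightarrow> 'a \<Rightarrow> 'a \<Rightarrow> real) \<Rightarrow> real" where
  "scal R = (\<Sum>b\<in>Basis. Ric R b b)"

end

theory Submission imports Defs begin

definition ONB :: "'a::euclidean_space set \<Rightarrow> bool" where
 "ONB B \<longleftrightarrow> finite B \<and> (\<forall>b\<in>B. \<forall>c\<in>B. b \<bullet> c = (if b = c then 1 else 0)) \<and> span B = UNIV"

lemma onb_expand:
  assumes "ONB B" shows "v = (\<Sum>b\<in>B. (v \<bullet> b) *\<^sub>R b)"
proof -
  have fin: "finite B" and on: "\<And>b c. b\<in>B \<Longrightarrow> c\<in>B \<Longrightarrow> b \<bullet> c = (if b = c then 1 else 0)"
    and sp: "span B = UNIV" using assms unfolding ONB_def by auto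
  define w where "w = v - (\<Sum>b\<in>B. (v \<bullet> b) *\<^sub>R b)"
  have "orthogonal w y" if "y \<in> B" for y
  proof -
    have "(\<Sum>b\<in>B. (v \<bullet> b) *\<^sub>R b) \<bullet> y = (\<Sum>b\<in>B. (v \<bullet> b) * (b \<bullet> y))"
      by (simp add: inner_sum_left)
    also have "\<dots> = (\<Sum>b\<in>B. if b = y then v \<bullet> b else 0)"
      by (rule sum.cong) (auto simp: on that)
    also have "\<dots> = v \<bullet> y" using fin that by simp
    finally show ?thesis unfolding w_def orthogonal_def by (simp add: inner_diff_left)
  qed
  hence "orthogonal w w" using orthogonal_to_span[of w B w] sp by auto
  hence "w = 0" by (simp add: orthogonal_def)
  thus ?thesis unfolding w_def by simp
qed

lemma onb_Basis: "ONB (Basis :: 'a::euclidean_space set)"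
  unfolding ONB_def by (auto simp: inner_Basis)

lemma onb_parseval:
  assumes "ONB B" shows "c \<bullet> d = (\<Sum>b\<in>B. (c \<bullet> b) * (d \<bullet> b))"
proof -
  have "c \<bullet> d = c \<bullet> (\<Sum>b\<in>B. (d \<bullet> b) *\<^sub>R b)" using onb_expand[OF assms, of d] by simp
  also have "\<dots> = (\<Sum>b\<in>B. (c \<bullet> b) * (d \<bullet> b))" by (simp add: inner_sum_right mult.commute)
  finally show ?thesis .
qed

lemma bilin_expand:
  fixes f :: "'a::euclidean_space \<Rightarrow> 'a \<Rightarrow> real"
  assumes l1: "\<And>v. linear (\<lambda>u. f u v)" and l2: "\<And>u. linear (f u)" and B: "ONB B"
  shows "f u v = (\<Sum>b\<in>B. \<Sum>c\<in>B. ((u \<bullet> b) * (v \<bullet> c)) * f b c)"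
proof -
  have "f u v = f (\<Sum>b\<in>B. (u \<bullet> b) *\<^sub>R b) (\<Sum>c\<in>B. (v \<bullet> c) *\<^sub>R c)"
    using onb_expand[OF B, of u] onb_expand[OF B, of v] by simp
  also have "\<dots> = (\<Sum>b\<in>B. (u \<bullet> b) * f b (\<Sum>c\<in>B. (v \<bullet> c) *\<^sub>R c))"
    using linear_sum[OF l1, of "\<lambda>b. (u \<bullet> b) *\<^sub>R b" B] linear_scale[OF l1] by simp
  also have "\<dots> = (\<Sum>b\<in>B. \<Sum>c\<in>B. ((u \<bullet> b) * (v \<bullet> c)) * f b c)"
    by (simp add: linear_sum[OF l2] linear_scale[OF l2] sum_distrib_left mult.assoc)
  finally show ?thesis .
qed

lemma trace_indep:
  fixes f :: "'a::euclidean_space \<Rightarrow> 'a \<Rightarrow> real"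
  assumes l1: "\<And>v. linear (\<lambda>u. f u v)" and l2: "\<And>u. linear (f u)" and B1: "ONB B1" and B2: "ONB B2"
  shows "(\<Sum>b\<in>B1. f b b) = (\<Sum>b\<in>B2. f b b)"
proof -
  have fin1: "finite B1" and fin2: "finite B2"
   and on: "\<And>b c. b\<in>B2 \<Longrightarrow> c\<in>B2 \<Longrightarrow> b \<bullet> c = (if b = c then 1 else 0)"
    using B1 B2 unfolding ONB_def by auto
  have "(\<Sum>b\<in>B1. f b b) = (\<Sum>b\<in>B1. \<Sum>c\<in>B2. \<Sum>d\<in>B2. ((b \<bullet> c) * (b \<bullet> d)) * f c d)"
    by (rule sum.cong[OF refl], rule bilin_expand[OF l1 l2 B2])
  also have "\<dots> = (\<Sum>c\<in>B2. \<Sum>d\<in>B2. (\<Sum>b\<in>B1. (b \<bullet> c) * (b \<bullet> d)) * f c d)"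
  proof -
    have "(\<Sum>b\<in>B1. \<Sum>c\<in>B2. \<Sum>d\<in>B2. ((b \<bullet> c) * (b \<bullet> d)) * f c d)
        = (\<Sum>c\<in>B2. \<Sum>b\<in>B1. \<Sum>d\<in>B2. ((b \<bullet> c) * (b \<bullet> d)) * f c d)"
      by (rule sum.swap)
    also have "\<dots> = (\<Sum>c\<in>B2. \<Sum>d\<in>B2. \<Sum>b\<in>B1. ((b \<bullet> c) * (b \<bullet> d)) * f c d)"
      by (rule sum.cong[OF refl], rule sum.swap)
    also have "\<dots> = (\<Sum>c\<in>B2. \<Sum>d\<in>B2. (\<Sum>b\<in>B1. (b \<bullet> c) * (b \<bullet> d)) * f c d)"
      by (simp only: sum_distrib_right)
    finally show ?thesis .
  qed
  also have "\<dots> = (\<Sum>c\<in>B2. \<Sum>d\<in>B2. (c \<bullet> d) * f c d)"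
  proof -
    have P: "(\<Sum>b\<in>B1. (b \<bullet> c) * (b \<bullet> d)) = c \<bullet> d" for c d
    proof -
      have "(\<Sum>b\<in>B1. (b \<bullet> c) * (b \<bullet> d)) = (\<Sum>b\<in>B1. (c \<bullet> b) * (d \<bullet> b))"
        by (rule sum.cong[OF refl]) (simp add: inner_commute)
      also have "\<dots> = c \<bullet> d" by (rule onb_parseval[OF B1, symmetric])
      finally show ?thesis .
    qed
    show ?thesis by (simp only: P)
  qed
  also have "\<dots> = (\<Sum>c\<in>B2. \<Sum>d\<in>B2. if c = d then f c d else 0)"
    by (intro sum.cong refl) (simp add: on)
  also have "\<dots> = (\<Sum>c\<in>B2. f c c)" using fin2 by simp
  finally show ?thesis .
qed

lemma onb_extend:
  fixes e :: "'a::euclidean_space"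
  assumes "norm e = 1"
  obtains B0 where "ONB (insert e B0)" "e \<notin> B0" "finite B0" "card (insert e B0) = DIM('a)"
proof -
  have sub: "subspace {y. orthogonal e y}" by (rule subspace_orthogonal_to_vector)
  obtain B0 where B0: "B0 \<subseteq> {y. orthogonal e y}" "pairwise orthogonal B0" "\<And>x. x \<in> B0 \<Longrightarrow> norm x = 1"
     "independent B0" "card B0 = dim {y. orthogonal e y}" "span B0 = {y. orthogonal e y}"
    by (rule orthonormal_basis_subspace[OF sub]) blast
  have ee: "e \<bullet> e = 1" using assms by (simp add: norm_eq_1)
  have eo: "e \<bullet> b = 0" if "b \<in> B0" for b using B0(1) that unfolding orthogonal_def by blast
  have eB0: "e \<notin> B0" using eo ee by force
  have eo2: "b \<bullet> e = 0" if "b \<in> B0" for b using eo[OF that] by (simp only: inner_commute)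
  have po: "pairwise orthogonal (insert e B0)"
    unfolding pairwise_insert using B0(2) eo eo2 by (auto simp: orthogonal_def)
  have n0: "0 \<notin> insert e B0" using B0(3) assms by (metis insertE norm_zero zero_neq_one)
  have ind: "independent (insert e B0)" by (rule pairwise_orthogonal_independent[OF po n0])
  have fin: "finite (insert e B0)" by (rule independent_imp_finite[OF ind])
  have sp: "span (insert e B0) = UNIV"
  proof -
    have "v \<in> span (insert e B0)" for v
    proof -
      have "orthogonal e (v - (v \<bullet> e) *\<^sub>R e)" unfolding orthogonal_def
        using ee by (simp add: inner_diff_right inner_commute)
      hence "v - (v \<bullet> e) *\<^sub>R e \<in> span B0" unfolding B0(6) by blast
      hence a: "v - (v \<bullet> e) *\<^sub>R e \<in> span (insert e B0)" by (meson span_mono subset_insertI subsetD)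
      have b: "(v \<bullet> e) *\<^sub>R e \<in> span (insert e B0)" by (simp add: span_base span_mul)
      have "v = (v - (v \<bullet> e) *\<^sub>R e) + (v \<bullet> e) *\<^sub>R e" by simp
      thus ?thesis using span_add[OF a b] by metis
    qed
    thus ?thesis by auto
  qed
  have onb: "ONB (insert e B0)" unfolding ONB_def
  proof (intro conjI fin sp ballI)
    fix b c assume b: "b \<in> insert e B0" and c: "c \<in> insert e B0"
    show "b \<bullet> c = (if b = c then 1 else 0)"
    proof (cases "b = c")
      case True
      have "norm b = 1" using b B0(3) assms by blast
      thus ?thesis using True by (simp add: norm_eq_1)
    next
      case False
      have "orthogonal b c" by (rule pairwiseD[OF po b c False])
      thus ?thesis using False unfolding orthogonal_def by simp
    qed
  qed
  have "card (insert e B0) = DIM('a)"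
    using dim_span_eq_card_independent[OF ind] sp dim_UNIV by metis
  thus ?thesis using that onb eB0 fin by simp
qed

lemma sum_pairs_nonneg:
  fixes K :: "'b \<Rightarrow> real"
  assumes fin: "finite A" and d: "d \<in> A" and Kd: "K d = 0" and c3: "card A \<ge> 3"
    and pair: "\<And>b c. b \<in> A \<Longrightarrow> c \<in> A \<Longrightarrow> b \<noteq> c \<Longrightarrow> b \<noteq> d \<Longrightarrow> c \<noteq> d \<Longrightarrow> K b + K c \<ge> 0"
  shows "sum K A \<ge> 0"
proof (cases "\<forall>b\<in>A. K b \<ge> 0")
  case True thus ?thesis by (simp add: sum_nonneg)
next
  case False
  then obtain b0 where b0: "b0 \<in> A" "K b0 < 0" by force
  have b0d: "b0 \<noteq> d" using b0 Kd by auto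
  have "A - {d, b0} \<noteq> {}"
  proof
    assume "A - {d, b0} = {}"
    hence "A \<subseteq> {d, b0}" by blast
    hence "card A \<le> card {d, b0}" by (intro card_mono) auto
    also have "\<dots> \<le> 2" by (simp add: card_insert_if)
    finally show False using c3 by linarith
  qed
  then obtain c1 where c1: "c1 \<in> A" "c1 \<noteq> d" "c1 \<noteq> b0" by blast
  have pos: "K c \<ge> 0" if "c \<in> A" "c \<noteq> b0" for c
  proof (cases "c = d")
    case True thus ?thesis using Kd by simp
  next
    case False
    have "K b0 + K c \<ge> 0" using pair[OF b0(1) that(1)] that(2) b0d False by metis
    thus ?thesis using b0 by linarith
  qed
  have "K c1 \<le> sum K (A - {b0})"
    by (rule member_le_sum) (use c1 pos fin in auto)
  moreover have "sum K A = K b0 + sum K (A - {b0})" using fin b0 by (simp add: sum.remove)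
  moreover have "K b0 + K c1 \<ge> 0" using pair[OF b0(1) c1(1)] c1 b0d by metis
  ultimately show ?thesis by linarith
qed
theorem lemma3p3:
  fixes R :: "'a::euclidean_space \<Rightarrow> 'a \<Rightarrow> 'a \<Rightarrow> 'a \<Rightarrow> real"
  assumes "algebraic_curvature_tensor R"
    and "DIM('a) \<ge> 3"
    and "DIM('a) \<ge> 4 \<Longrightarrow> in_PIC1 R"
    and "DIM('a) = 3 \<Longrightarrow> nonneg_sectional R"
  shows "\<forall>x::'a. Ric R x x \<le> scal R / 2 * (x \<bullet> x)"
proof -
  note A = assms(1)[unfolded algebraic_curvature_tensor_def]
  have L1: "linear (\<lambda>x. R x y z w)" and L2: "linear (\<lambda>y. R x y z w)"
   and L3: "linear (\<lambda>z. R x y z w)" and L4: "linear (\<lambda>w. R x y z w)" for x y z w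
    using A[THEN conjunct1] A[THEN conjunct2, THEN conjunct1]
      A[THEN conjunct2, THEN conjunct2, THEN conjunct1]
      A[THEN conjunct2, THEN conjunct2, THEN conjunct2, THEN conjunct1] by blast+
  have AS: "\<forall>x y z w. R x y z w = - R y x z w"
    using A[THEN conjunct2, THEN conjunct2, THEN conjunct2, THEN conjunct2, THEN conjunct1] .
  have PS: "\<forall>x y z w. R x y z w = R z w x y"
    using A[THEN conjunct2, THEN conjunct2, THEN conjunct2, THEN conjunct2, THEN conjunct2, THEN conjunct2, THEN conjunct1] .
  have sym: "R b c c b = R c b b c" for b c using PS by blast
  have zero: "R b b b b = 0" for b
  proof -
    have "R b b b b = - R b b b b" using AS by blast
    thus ?thesis by linarith
  qed
  have RicL1: "linear (\<lambda>u. Ric R u v)" for v unfolding Ric_def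
    by (rule linear_compose_sum) (auto intro: L1)
  have RicL2: "linear (Ric R u)" for u unfolding Ric_def
    by (rule linear_compose_sum) (auto intro: L4)
  have RicB: "Ric R u u = (\<Sum>c\<in>B. R u c c u)" if "ONB B" for u B
    unfolding Ric_def by (rule trace_indep[OF _ _ onb_Basis that]) (auto intro: L2 L3)
  have scalB: "scal R = (\<Sum>b\<in>B. \<Sum>c\<in>B. R b c c b)" if "ONB B" for B
    unfolding scal_def using trace_indep[OF RicL1 RicL2 onb_Basis that] RicB[OF that] by simp
  have unit: "Ric R e e \<le> scal R / 2" if ne1: "norm e = 1" for e
  proof -
    obtain B0 where B: "ONB (insert e B0)" "e \<notin> B0" "finite B0" "card (insert e B0) = DIM('a)"
      using onb_extend[OF ne1] by metis
    define K where "K b c = R b c c b" for b c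
    have Ksym: "K b c = K c b" for b c unfolding K_def by (rule sym)
    have Kz: "K b b = 0" for b unfolding K_def by (rule zero)
    have on: "b \<bullet> c = (if b = c then 1 else 0)" if "b \<in> insert e B0" "c \<in> insert e B0" for b c
      using B(1) that unfolding ONB_def by auto
    have ric: "Ric R e e = (\<Sum>c\<in>B0. K e c)"
      using RicB[OF B(1), of e] B(2,3) Kz by (simp add: K_def)
    have sc: "scal R = 2 * (\<Sum>c\<in>B0. K e c) + (\<Sum>b\<in>B0. \<Sum>c\<in>B0. K b c)"
    proof -
      have "scal R = (\<Sum>b\<in>insert e B0. \<Sum>c\<in>insert e B0. K b c)"
        using scalB[OF B(1)] by (simp add: K_def)
      also have "\<dots> = (\<Sum>c\<in>B0. K e c) + (\<Sum>b\<in>B0. K b e + (\<Sum>c\<in>B0. K b c))"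
        using B(2,3) Kz by simp
      also have "\<dots> = 2 * (\<Sum>c\<in>B0. K e c) + (\<Sum>b\<in>B0. \<Sum>c\<in>B0. K b c)"
        by (simp add: sum.distrib Ksym[of _ e])
      finally show ?thesis .
    qed
    have inner_nonneg: "(\<Sum>c\<in>B0. K c d) \<ge> 0" if d: "d \<in> B0" for d
    proof (cases "DIM('a) = 3")
      case True
      hence "nonneg_sectional R" using assms(4) by simp
      thus ?thesis unfolding K_def nonneg_sectional_def by (simp add: sum_nonneg)
    next
      case False
      hence P: "in_PIC1 R" using assms(2,3) by simp
      have c3: "card B0 \<ge> 3" using B(2,3,4) assms(2) False by simp
      show ?thesis
      proof (rule sum_pairs_nonneg[OF B(3) d _ c3])
        show "K d d = 0" by (rule Kz)
        fix b c assume bc: "b \<in> B0" "c \<in> B0" "b \<noteq> c" "b \<noteq> d" "c \<noteq> d"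
        have ne: "e \<noteq> b" "e \<noteq> c" "e \<noteq> d" using bc d B(2) by auto
        have "orthonormal4 b c d e"
          unfolding orthonormal4_def
        proof (intro ballI)
          fix i j assume "i \<in> {0..<4::nat}" "j \<in> {0..<4::nat}"
          hence "i \<in> {0,1,2,3}" "j \<in> {0,1,2,3}" by auto
          thus "[b, c, d, e] ! i \<bullet> [b, c, d, e] ! j = (if i = j then 1 else 0)"
            using on bc d ne by (auto simp: inner_commute)
        qed
        hence "0 \<le> R b d d b + 0\<^sup>2 * R b e e b + R c d d c + 0\<^sup>2 * R c e e c + 2 * 0 * R b c d e"
          using P \<open>orthonormal4 b c d e\<close> unfolding in_PIC1_def
          by (metis order_refl zero_le_one)
        thus "0 \<le> K b d + K c d" by (simp add: K_def)
      qed
    qed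
    have "(\<Sum>b\<in>B0. \<Sum>c\<in>B0. K b c) \<ge> 0"
      using inner_nonneg by (simp add: sum_nonneg Ksym[of _ ])
    thus ?thesis using ric sc by linarith
  qed
  show ?thesis
  proof
    fix x :: 'a
    show "Ric R x x \<le> scal R / 2 * (x \<bullet> x)"
    proof (cases "x = 0")
      case True
      have "Ric R 0 0 = 0" using linear_0[OF RicL2] by simp
      thus ?thesis using True by simp
    next
      case False
      define e where "e = x /\<^sub>R norm x"
      have ne: "norm e = 1" using False unfolding e_def by simp
      have xe: "x = norm x *\<^sub>R e" using False unfolding e_def by simp
      have "Ric R x x = (norm x)\<^sup>2 * Ric R e e"
        by (subst (1 2) xe) (simp add: linear_scale[OF RicL1] linear_scale[OF RicL2] power2_eq_square)
      also have "\<dots> \<le> (norm x)\<^sup>2 * (scal R / 2)" by (rule mult_left_mono[OF unit[OF ne]]) simp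
      finally show ?thesis by (simp add: power2_norm_eq_inner mult.commute)
    qed
  qed
qed

end
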